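(* Let $\mathbb{F}$ be a field of characteristic $2$, $V$ a finite-dimensional $\mathbb{F}$-vector space and $b$ a non-degenerate symmetric bilinear form on $V$. Let $x$ be a non-zero vector of $V$ with $b(x,x)=0$, and let $u$ be a $b$-alternating endomorphism of $V$. The following are equivalent: (i) $u(x)=0$ and $u(\{x\}^\perp) \subset \mathbb{F}x$; (ii) there exists $y \in \{x\}^\perp$ such that $u = x\wedge_b y$. Moreover, if these conditions hold then $u$ is nilpotent.
   Context: An endomorphism $u$ of $V$ is $b$-alternating if the bilinear form $(z,w)\mapsto b(z,u(w))$ is alternating (vanishes on all pairs $(z,z)$). $\{x\}^\perp = \{z\in V : b(x,z)=0\}$. For $x,y\in V$, $x \wedge_b y$ is the endomorphism $z \mapsto b(y,z)\,x - b(x,z)\,y$. *)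

theory Defs
  imports Complex_Main
begin

definition symmetric_bilinear_form :: "('a::field \<Rightarrow> 'v::ab_group_add \<Rightarrow> 'v) \<Rightarrow> ('v \<Rightarrow> 'v \<Rightarrow> 'a) \<Rightarrow> bool" where
  "symmetric_bilinear_form scale b \<longleftrightarrow>
     (\<forall>z. Vector_Spaces.linear scale (*) (b z)) \<and> (\<forall>z w. b z w = b w z)"

definition nondegenerate_form :: "('v::ab_group_add \<Rightarrow> 'v \<Rightarrow> 'a::field) \<Rightarrow> bool" where
  "nondegenerate_form b \<longleftrightarrow> (\<forall>z. (\<forall>w. b z w = 0) \<longrightarrow> z = 0)"

definition b_alternating :: "('v \<Rightarrow> 'v \<Rightarrow> 'a::field) \<Rightarrow> ('v \<Rightarrow> 'v) \<Rightarrow> bool" where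
  "b_alternating b u \<longleftrightarrow> (\<forall>z. b z (u z) = 0)"

definition orth_single :: "('v \<Rightarrow> 'v \<Rightarrow> 'a::field) \<Rightarrow> 'v \<Rightarrow> 'v set" where
  "orth_single b x = {z. b x z = 0}"

definition wedge_b :: "('a::field \<Rightarrow> 'v::ab_group_add \<Rightarrow> 'v) \<Rightarrow> ('v \<Rightarrow> 'v \<Rightarrow> 'a) \<Rightarrow> 'v \<Rightarrow> 'v \<Rightarrow> 'v \<Rightarrow> 'v" where
  "wedge_b scale b x y = (\<lambda>z. scale (b y z) x - scale (b x z) y)"

end

theory Submission
  imports Defs
begin

theorem corollary4p6:
  fixes scale :: "'a::field \<Rightarrow> 'v::ab_group_add \<Rightarrow> 'v"
    and basis :: "'v set"
    and b :: "'v \<Rightarrow> 'v \<Rightarrow> 'a"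
    and u :: "'v \<Rightarrow> 'v"
    and x :: 'v
  assumes fdvs: "finite_dimensional_vector_space scale basis"
    and char2: "(1::'a) + 1 = 0"
    and symb: "symmetric_bilinear_form scale b"
    and nondeg: "nondegenerate_form b"
    and xnz: "x \<noteq> 0"
    and xiso: "b x x = 0"
    and ulin: "Vector_Spaces.linear scale scale u"
    and ualt: "b_alternating b u"
  shows "((u x = 0 \<and> (\<forall>z \<in> orth_single b x. \<exists>c. u z = scale c x))
           \<longleftrightarrow> (\<exists>y \<in> orth_single b x. u = wedge_b scale b x y))
         \<and> ((u x = 0 \<and> (\<forall>z \<in> orth_single b x. \<exists>c. u z = scale c x))
           \<longrightarrow> (\<exists>k. u ^^ k = (\<lambda>_. 0)))"
proof -
  have VS: "vector_space scale" and uadd: "\<And>p q. u (p + q) = u p + u q"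
    and usc: "\<And>c p. u (scale c p) = scale c (u p)"
    using ulin unfolding Vector_Spaces.linear_iff by auto
  interpret V: vector_space scale by (rule VS)
  have udiff: "\<And>p q. u (p - q) = u p - u q"
    by (metis uadd diff_add_cancel add_diff_cancel)
  have u0: "u 0 = 0" using udiff[of 0 0] by simp
  have bsym: "\<And>p q. b p q = b q p" using symb unfolding symmetric_bilinear_form_def by auto
  have badd: "\<And>z p q. b z (p + q) = b z p + b z q"
    and bsc: "\<And>z c p. b z (scale c p) = c * b z p"
    using symb unfolding symmetric_bilinear_form_def Vector_Spaces.linear_iff by auto
  have bdiff: "\<And>z p q. b z (p - q) = b z p - b z q"
    by (metis badd diff_add_cancel add_diff_cancel)
  have bneg: "\<And>z p. b z (- p) = - b z p"
    by (metis bdiff diff_0 diff_self)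
  have bz: "\<And>z. b z 0 = 0" using bdiff by (metis diff_self)
  have alt: "\<And>z. b z (u z) = 0" using ualt unfolding b_alternating_def by auto
  have pol: "\<And>z w. b z (u w) = - b w (u z)"
  proof -
    fix z w
    have "0 = b (z + w) (u (z + w))" using alt by simp
    also have "\<dots> = b z (u z) + b z (u w) + (b w (u z) + b w (u w))"
      by (simp add: uadd badd bsym[of "z + w"] bsym[of _ z] bsym[of _ w])
    finally show "b z (u w) = - b w (u z)" using alt by (simp add: eq_neg_iff_add_eq_0)
  qed
  have wedge_ii_i: "u x = 0 \<and> (\<forall>z \<in> orth_single b x. \<exists>c. u z = scale c x)"
    if y: "y \<in> orth_single b x" and uy: "u = wedge_b scale b x y" for y
  proof -
    have bxy: "b x y = 0" using y unfolding orth_single_def by auto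
    show ?thesis
    proof
      show "u x = 0" unfolding uy wedge_b_def using bxy xiso bsym[of y x] by simp
      show "\<forall>z \<in> orth_single b x. \<exists>c. u z = scale c x"
        unfolding uy wedge_b_def orth_single_def by auto
    qed
  qed
  have main: "\<exists>y \<in> orth_single b x. u = wedge_b scale b x y"
    if ux: "u x = 0" and uo: "\<forall>z \<in> orth_single b x. \<exists>c. u z = scale c x"
  proof -
    obtain w0 where w0: "b x w0 \<noteq> 0" using nondeg xnz unfolding nondegenerate_form_def by auto
    define w where "w = scale (inverse (b x w0)) w0"
    have bxw: "b x w = 1" unfolding w_def using w0 bsc by simp
    define y where "y = - u w"
    have bxuw: "b x (u w) = 0" using pol[of x w] ux bz by simp
    have "y \<in> orth_single b x" unfolding y_def orth_single_def using bxuw bneg by simp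
    moreover have "u = wedge_b scale b x y"
    proof
      fix z
      define z' where "z' = z - scale (b x z) w"
      have "b x z' = 0" unfolding z'_def using bdiff bsc bxw by simp
      then obtain f where f: "u z' = scale f x" using uo unfolding orth_single_def by auto
      have uz': "u z' = u z - scale (b x z) (u w)" unfolding z'_def by (simp add: udiff usc)
      have "b w (u z') = f" using f bsc bxw bsym[of w x] by simp
      also have "b w (u z') = - b z' (u w)" using pol[of w z'] by simp
      also have "b z' (u w) = b (u w) z - b x z * b (u w) w"
        unfolding z'_def by (simp add: bsym[of _ "u w"] bdiff bsc)
      also have "b (u w) w = 0" using alt[of w] bsym by metis
      finally have "f = - b (u w) z" by simp
      hence "u z = scale (b x z) (u w) - scale (b (u w) z) x"
        using uz' f by (metis V.scale_minus_left diff_eq_eq uminus_add_conv_diff add.commute)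
      thus "u z = wedge_b scale b x y z"
        unfolding wedge_b_def y_def by (simp add: bsym[of "- u w"] bneg bsym[of _ "u w"] V.scale_minus_left)
    qed
    ultimately show ?thesis by blast
  qed
  have nil: "\<exists>k. u ^^ k = (\<lambda>_. 0)"
    if ux: "u x = 0" and uo: "\<forall>z \<in> orth_single b x. \<exists>c. u z = scale c x"
  proof -
    obtain y where y: "y \<in> orth_single b x" and uy: "u = wedge_b scale b x y"
      using main[OF ux uo] by blast
    have bxy: "b x y = 0" using y unfolding orth_single_def by auto
    have uu: "u (u z) = scale (- (b x z * b y y)) x" for z
      using uy bxy ux
      by (simp add: wedge_b_def bdiff bsc bsym[of y x] V.scale_right_diff_distrib usc udiff)
    have "(u ^^ 3) z = 0" for z
      using uu[of z] by (simp add: numeral_3_eq_3 usc ux udiff[of 0, simplified] u0)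
    thus ?thesis by blast
  qed
  show ?thesis using wedge_ii_i main nil by blast
qed

end
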